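(* Consider the cone percolation process on $\mathbb{T}_d$ ($d\ge2$) with $R$ binomial: $\mathbb{P}(R=k)=\binom{n}{k}p^k(1-p)^{n-k}$, $k=0,1,\dots,n$, where $n\ge1$ and $p\in(0,1)$. If $(pd+1-p)^n-(1-p)^n>1$ then $\mathbb{P}[V]>0$; if $2d-d(pd+1-p)^n\ge 1$ then $\mathbb{P}[V]=0$.
   Context: Let $d\ge 2$ and let $\mathbb{T}_d$ be the infinite tree in which every vertex has exactly $d+1$ neighbours. Fix a vertex $\mathcal{O}$ (the origin); $d(u,v)$ denotes graph distance. Write $u\le v$ if $u$ lies on the path from $\mathcal{O}$ to $v$ (so $\mathcal{O}\le v$ for all $v$). Let $R$ be a random variable with values in $\{0,1,2,\dots\}$. Cone percolation on $\mathbb{T}_d$: to each vertex $u$ attach an independent copy $R_u$ of $R$; let $B_u=\{v: u\le v,\ d(u,v)\le R_u\}$; set $I_0=\{\mathcal{O}\}$, $I_{n+1}=\bigcup_{u\in I_n}B_u$, $I=\bigcup_{n\ge0}I_n$, and let $V=\{|I|=\infty\}$; $\mathbb{P}$ is the probability measure of this process. *)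

theory Defs
  imports "HOL-Probability.Probability"
begin

text \<open>Vertices of the (d+1)-regular tree T_d, rooted at the origin O = [].
  A vertex is the list of child indices along the path from O: the first
  index ranges over the d+1 neighbours of O, every later index over the
  d children of a non-root vertex. u \<le> v (u on the path from O to v) is
  the prefix relation, and then the graph distance d(u,v) = length v - length u.\<close>

definition tree_verts :: "nat \<Rightarrow> nat list set" where
  "tree_verts d = {xs. \<forall>i<length xs. xs ! i < (if i = 0 then d + 1 else d)}"

definition cone :: "nat \<Rightarrow> (nat list \<Rightarrow> nat) \<Rightarrow> nat list \<Rightarrow> nat list set" where
  "cone d r u = {v \<in> tree_verts d. prefix u v \<and> length v - length u \<le> r u}"

inductive_set cluster :: "nat \<Rightarrow> (nat list \<Rightarrow> nat) \<Rightarrow> nat list set"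
  for d :: nat and r :: "nat list \<Rightarrow> nat" where
  origin: "[] \<in> cluster d r"
| spread: "u \<in> cluster d r \<Longrightarrow> v \<in> cone d r u \<Longrightarrow> v \<in> cluster d r"

definition cone_space :: "nat \<Rightarrow> nat pmf \<Rightarrow> (nat list \<Rightarrow> nat) measure" where
  "cone_space d Rdist = PiM (tree_verts d) (\<lambda>_. measure_pmf Rdist)"

definition survival_event :: "nat \<Rightarrow> nat pmf \<Rightarrow> (nat list \<Rightarrow> nat) set" where
  "survival_event d Rdist = {\<omega> \<in> space (cone_space d Rdist). infinite (cluster d \<omega>)}"

end

theory Submission
  imports Defs
begin


lemma space_cone: "space (cone_space d q) = PiE (tree_verts d) (\<lambda>_. UNIV)"
  by (simp add: cone_space_def space_PiM)

lemma prob_space_cone: "prob_space (cone_space d q)"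
  unfolding cone_space_def by (rule prob_space_PiM) (simp add: prob_space_measure_pmf)

lemma restrict_in_space:
  assumes "K \<subseteq> tree_verts d" "\<omega> \<in> space (cone_space d q)"
  shows "restrict \<omega> K \<in> space (cone_space d q)"
  using assms by (auto simp: space_cone PiE_def extensional_def)

lemma sets_PiM_fin_all:
  assumes K: "finite K"
  shows "{x \<in> space (PiM K (\<lambda>_. measure_pmf q)). P x} \<in> sets (PiM K (\<lambda>_. measure_pmf (q::nat pmf)))"
proof (rule sets.countable)
  fix a assume a: "a \<in> {x \<in> space (PiM K (\<lambda>_. measure_pmf q)). P x}"
  hence a': "a \<in> PiE K (\<lambda>_. UNIV)" by (simp add: space_PiM)
  have "{a} = PiE K (\<lambda>i. {a i})"
    using a' by (auto simp: PiE_def extensional_def Pi_def fun_eq_iff) (metis)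
  thus "{a} \<in> sets (PiM K (\<lambda>_. measure_pmf q))" using K by (simp add: sets_PiM_I_finite)
next
  have "countable (PiE K (\<lambda>_. UNIV :: nat set))"
    using K by (intro countable_PiE) auto
  thus "countable {x \<in> space (PiM K (\<lambda>_. measure_pmf q)). P x}"
    by (rule countable_subset[rotated]) (auto simp: space_PiM)
qed

lemma sets_finite_dep:
  assumes K: "finite K" "K \<subseteq> tree_verts d"
  shows "{\<omega> \<in> space (cone_space d q). P (restrict \<omega> K)} \<in> sets (cone_space d q)"
proof -
  let ?N = "PiM K (\<lambda>_. measure_pmf q)"
  define A where "A = {x \<in> space ?N. P x}"
  have "A \<in> sets ?N"
  proof (rule sets.countable)
    fix a assume a: "a \<in> A"
    hence a': "a \<in> PiE K (\<lambda>_. UNIV)" by (simp add: A_def space_PiM)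
    have "{a} = PiE K (\<lambda>i. {a i})"
      using a' by (auto simp: PiE_def extensional_def Pi_def fun_eq_iff) (metis)
    thus "{a} \<in> sets ?N" using K by (simp add: sets_PiM_I_finite)
  next
    have "countable (PiE K (\<lambda>_. UNIV :: nat set))"
      using K by (intro countable_PiE) auto
    thus "countable A" by (rule countable_subset[rotated]) (auto simp: A_def space_PiM)
  qed
  hence "(\<lambda>\<omega>. restrict \<omega> K) -` A \<inter> space (cone_space d q) \<in> sets (cone_space d q)"
    unfolding cone_space_def
    by (intro measurable_sets[OF measurable_restrict_subset[OF K(2)]])
  also have "(\<lambda>\<omega>. restrict \<omega> K) -` A \<inter> space (cone_space d q) = {\<omega> \<in> space (cone_space d q). P (restrict \<omega> K)}"
    using K by (auto simp: A_def space_PiM space_cone PiE_def extensional_def)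
  finally show ?thesis .
qed

lemma indep_coords:
  assumes "I \<noteq> {}"
  shows "prob_space.indep_vars (PiM I (\<lambda>_. measure_pmf q)) (\<lambda>_. measure_pmf q) (\<lambda>i \<omega>. \<omega> i) I"
proof -
  interpret P: prob_space "PiM I (\<lambda>_. measure_pmf q)"
    by (rule prob_space_PiM) (simp add: prob_space_measure_pmf)
  have d1: "distr (PiM I (\<lambda>_. measure_pmf q)) (PiM I (\<lambda>_. measure_pmf q)) (\<lambda>x. \<lambda>i\<in>I. x i) = PiM I (\<lambda>_. measure_pmf q)"
  proof -
    have "distr (PiM I (\<lambda>_. measure_pmf q)) (PiM I (\<lambda>_. measure_pmf q)) (\<lambda>x. \<lambda>i\<in>I. x i)
        = distr (PiM I (\<lambda>_. measure_pmf q)) (PiM I (\<lambda>_. measure_pmf q)) (\<lambda>x. x)"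
      by (rule distr_cong) (auto simp: space_PiM PiE_def extensional_def restrict_def)
    thus ?thesis by simp
  qed
  have d2: "distr (PiM I (\<lambda>_. measure_pmf q)) (measure_pmf q) (\<lambda>\<omega>. \<omega> i) = measure_pmf q" if "i \<in> I" for i
    using that by (intro distr_PiM_component) (simp_all add: prob_space_measure_pmf)
  show ?thesis
    apply (subst P.indep_vars_iff_distr_eq_PiM'[OF assms])
    apply (simp add: measurable_component_singleton)
    apply (simp add: d1 d2 cong: PiM_cong)
    done
qed


lemma indep_events_prod:
  assumes L: "finite L" "L \<noteq> {}" and K: "\<And>j. j \<in> L \<Longrightarrow> finite (K j) \<and> K j \<subseteq> tree_verts d"
    and disj: "disjoint_family_on K L"
  shows "measure (cone_space d q) (\<Inter>j\<in>L. {\<omega> \<in> space (cone_space d q). P j (restrict \<omega> (K j))})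
       = (\<Prod>j\<in>L. measure (cone_space d q) {\<omega> \<in> space (cone_space d q). P j (restrict \<omega> (K j))})"
proof -
  interpret C: prob_space "cone_space d q" by (rule prob_space_cone)
  have ne: "tree_verts d \<noteq> {}" by (auto simp: tree_verts_def)
  have iv: "C.indep_vars (\<lambda>j. PiM (K j) (\<lambda>_. measure_pmf q)) (\<lambda>j \<omega>. restrict (\<lambda>i. \<omega> i) (K j)) L"
    unfolding cone_space_def
    by (rule prob_space.indep_vars_restrict[OF _ indep_coords[OF ne]])
       (use K disj prob_space_cone[of d q] in \<open>auto simp: cone_space_def\<close>)
  define A where "A j = {x \<in> space (PiM (K j) (\<lambda>_. measure_pmf q)). P j x}" for j
  have "C.prob (\<Inter>j\<in>L. (\<lambda>\<omega>. restrict (\<lambda>i. \<omega> i) (K j)) -` A j \<inter> space (cone_space d q))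
      = (\<Prod>j\<in>L. C.prob ((\<lambda>\<omega>. restrict (\<lambda>i. \<omega> i) (K j)) -` A j \<inter> space (cone_space d q)))"
    by (rule C.indep_varsD[OF iv L(2,1) order_refl]) (use K in \<open>auto simp: A_def intro!: sets_PiM_fin_all\<close>)
  moreover have "(\<lambda>\<omega>. restrict (\<lambda>i. \<omega> i) (K j)) -` A j \<inter> space (cone_space d q)
     = {\<omega> \<in> space (cone_space d q). P j (restrict \<omega> (K j))}" for j
    by (auto simp: A_def space_PiM space_cone PiE_def extensional_def)
  ultimately show ?thesis by simp
qed

lemma prob_coord:
  assumes "u \<in> tree_verts d"
  shows "measure (cone_space d q) {\<omega> \<in> space (cone_space d q). \<omega> u \<in> S} = measure_pmf.prob q S"
proof -
  have "distr (cone_space d q) (measure_pmf q) (\<lambda>\<omega>. \<omega> u) = measure_pmf q"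
    unfolding cone_space_def using assms by (intro distr_PiM_component) (simp_all add: prob_space_measure_pmf)
  hence "measure (distr (cone_space d q) (measure_pmf q) (\<lambda>\<omega>. \<omega> u)) S = measure_pmf.prob q S" by simp
  moreover have "measure (distr (cone_space d q) (measure_pmf q) (\<lambda>\<omega>. \<omega> u)) S
      = measure (cone_space d q) ((\<lambda>\<omega>. \<omega> u) -` S \<inter> space (cone_space d q))"
    by (rule measure_distr) (use assms in \<open>auto simp: cone_space_def\<close>)
  ultimately show ?thesis by (simp add: vimage_def Int_def conj_commute)
qed



lemma tree_verts_prefix:
  assumes "v \<in> tree_verts d" "prefix w v" shows "w \<in> tree_verts d"
proof -
  obtain zs where v: "v = w @ zs" using assms(2) by (auto simp: prefix_def)
  show ?thesis unfolding tree_verts_def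
  proof safe
    fix i assume i: "i < length w"
    have "v ! i < (if i = 0 then d + 1 else d)" using assms(1) i v by (auto simp: tree_verts_def)
    thus "w ! i < (if i = 0 then d + 1 else d)" using i v by (simp add: nth_append)
  qed
qed

lemma tree_verts_append:
  assumes "u \<in> tree_verts d" "set w \<subseteq> {..<d}" shows "u @ w \<in> tree_verts d"
  unfolding tree_verts_def
proof safe
  fix i assume i: "i < length (u @ w)"
  show "(u @ w) ! i < (if i = 0 then d + 1 else d)"
  proof (cases "i < length u")
    case True thus ?thesis using assms(1) by (auto simp: tree_verts_def nth_append)
  next
    case False
    hence "w ! (i - length u) \<in> set w" using i by auto
    hence "w ! (i - length u) < d" using assms(2) by auto
    thus ?thesis using False by (auto simp: nth_append)
  qed
qed

lemma cluster_sub: "v \<in> cluster d r \<Longrightarrow> v \<in> tree_verts d"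
  by (induction rule: cluster.induct) (auto simp: tree_verts_def cone_def)

lemma cluster_char:
  "v \<in> cluster d r \<longleftrightarrow> v \<in> tree_verts d \<and> (v = [] \<or> (\<exists>a. strict_prefix a v \<and> a \<in> cluster d r \<and> length v - length a \<le> r a))"
proof
  assume "v \<in> cluster d r"
  thus "v \<in> tree_verts d \<and> (v = [] \<or> (\<exists>a. strict_prefix a v \<and> a \<in> cluster d r \<and> length v - length a \<le> r a))"
  proof (induction rule: cluster.induct)
    case origin thus ?case by (auto simp: tree_verts_def)
  next
    case (spread u v)
    show ?case
    proof (cases "u = v")
      case True thus ?thesis using spread by simp
    next
      case False thus ?thesis using spread by (auto simp: cone_def intro: strict_prefixI)
    qed
  qed
next
  assume "v \<in> tree_verts d \<and> (v = [] \<or> (\<exists>a. strict_prefix a v \<and> a \<in> cluster d r \<and> length v - length a \<le> r a))"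
  thus "v \<in> cluster d r"
    by (auto intro: cluster.intros simp: cone_def)
qed

lemma cluster_prefix_closed:
  assumes "v \<in> cluster d r" "prefix w v" shows "w \<in> cluster d r"
  using assms
proof (induction arbitrary: w rule: cluster.induct)
  case origin thus ?case by (simp add: cluster.origin)
next
  case (spread u v)
  from prefix_same_cases[OF spread.prems spread.hyps(2)[unfolded cone_def, THEN CollectD, THEN conjunct2, THEN conjunct1]]
  show ?case
  proof
    assume "prefix w u" thus ?thesis using spread.IH by blast
  next
    assume uw: "prefix u w"
    have "w \<in> tree_verts d" using spread.hyps(2) spread.prems by (auto simp: cone_def intro: tree_verts_prefix)
    moreover have "length w \<le> length v" using spread.prems by (simp add: prefix_length_le)
    ultimately have "w \<in> cone d r u" using spread.hyps(2) uw by (auto simp: cone_def)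
    thus ?thesis by (rule cluster.spread[OF spread.hyps(1)])
  qed
qed

lemma cluster_dep:
  assumes "\<And>a. strict_prefix a v \<Longrightarrow> r a = r' a"
  shows "v \<in> cluster d r \<longleftrightarrow> v \<in> cluster d r'"
  using assms
proof (induction "length v" arbitrary: v rule: less_induct)
  case less
  have IH: "a \<in> cluster d r \<longleftrightarrow> a \<in> cluster d r'" if "strict_prefix a v" for a
  proof (rule less.hyps)
    show "length a < length v" using prefix_length_less[OF that] .
    show "r b = r' b" if "strict_prefix b a" for b
      using less.prems prefix_order.less_trans[OF that \<open>strict_prefix a v\<close>] by blast
  qed
  have "v \<in> cluster d r \<longleftrightarrow> v \<in> tree_verts d \<and> (v = [] \<or> (\<exists>a. strict_prefix a v \<and> a \<in> cluster d r \<and> length v - length a \<le> r a))"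
    by (rule cluster_char)
  also have "\<dots> \<longleftrightarrow> v \<in> tree_verts d \<and> (v = [] \<or> (\<exists>a. strict_prefix a v \<and> a \<in> cluster d r' \<and> length v - length a \<le> r' a))"
  proof -
    have "(\<exists>a. strict_prefix a v \<and> a \<in> cluster d r \<and> length v - length a \<le> r a) \<longleftrightarrow>
          (\<exists>a. strict_prefix a v \<and> a \<in> cluster d r' \<and> length v - length a \<le> r' a)"
      apply (rule ex_cong1)
      subgoal for a using IH[of a] less.prems[of a] by auto
      done
    thus ?thesis by simp
  qed
  also have "\<dots> \<longleftrightarrow> v \<in> cluster d r'" by (rule cluster_char[symmetric])
  finally show ?case .
qed

lemma finite_strict_prefixes: "finite {a. strict_prefix a v}"
  by (rule finite_subset[of _ "set (prefixes v)"]) (auto simp: strict_prefix_def)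

lemma sets_in_cluster:
  "{\<omega> \<in> space (cone_space d q). v \<in> cluster d \<omega>} \<in> sets (cone_space d q)"
proof (cases "v \<in> tree_verts d")
  case True
  let ?K = "{a. strict_prefix a v}"
  have "{\<omega> \<in> space (cone_space d q). v \<in> cluster d \<omega>} = {\<omega> \<in> space (cone_space d q). v \<in> cluster d (restrict \<omega> ?K)}"
  proof (rule Collect_cong)
    fix \<omega>
    have "v \<in> cluster d \<omega> \<longleftrightarrow> v \<in> cluster d (restrict \<omega> ?K)"
      by (rule cluster_dep) simp
    thus "(\<omega> \<in> space (cone_space d q) \<and> v \<in> cluster d \<omega>) = (\<omega> \<in> space (cone_space d q) \<and> v \<in> cluster d (restrict \<omega> ?K))"
      by simp
  qed
  also have "\<dots> \<in> sets (cone_space d q)"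
    by (rule sets_finite_dep) (use True finite_strict_prefixes in \<open>auto intro: tree_verts_prefix\<close>)
  finally show ?thesis .
next
  case False
  hence eq: "{\<omega> \<in> space (cone_space d q). v \<in> cluster d \<omega>} = {}" using cluster_sub by blast
  show ?thesis unfolding eq by simp
qed

definition Aev :: "nat \<Rightarrow> nat pmf \<Rightarrow> nat \<Rightarrow> (nat list \<Rightarrow> nat) set" where
  "Aev d q k = {\<omega> \<in> space (cone_space d q). \<exists>v\<in>cluster d \<omega>. k \<le> length v}"

lemma sets_Aev: "Aev d q k \<in> sets (cone_space d q)"
proof -
  have "Aev d q k = (\<Union>v\<in>{v. k \<le> length v}. {\<omega> \<in> space (cone_space d q). v \<in> cluster d \<omega>})"
    by (auto simp: Aev_def)
  also have "\<dots> \<in> sets (cone_space d q)"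
    by (intro sets.countable_UN') (auto intro: sets_in_cluster)
  finally show ?thesis .
qed

lemma finite_tree_verts_le: "finite {v \<in> tree_verts d. length v \<le> k}"
proof (rule finite_subset[OF _ finite_lists_length_le[of "{..<d+1}" k]])
  show "{v \<in> tree_verts d. length v \<le> k} \<subseteq> {xs. set xs \<subseteq> {..<d + 1} \<and> length xs \<le> k}"
  proof
    fix v assume "v \<in> {v \<in> tree_verts d. length v \<le> k}"
    hence v: "v \<in> tree_verts d" and l: "length v \<le> k" by auto
    have "set v \<subseteq> {..<d+1}"
    proof
      fix x assume x: "x \<in> set v"
      then obtain i where "i < length v" "v ! i = x" by (auto simp: in_set_conv_nth)
      thus "x \<in> {..<d+1}" using v by (auto simp: tree_verts_def split: if_splits)
    qed
    thus "v \<in> {xs. set xs \<subseteq> {..<d + 1} \<and> length xs \<le> k}" using l by simp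
  qed
qed simp

lemma infinite_cluster_iff:
  "infinite (cluster d r) \<longleftrightarrow> (\<forall>k. \<exists>v\<in>cluster d r. k \<le> length v)"
proof
  assume inf: "infinite (cluster d r)"
  show "\<forall>k. \<exists>v\<in>cluster d r. k \<le> length v"
  proof (rule ccontr)
    assume "\<not> ?thesis"
    then obtain k where "\<forall>v\<in>cluster d r. length v < k" by (auto simp: not_le)
    hence "cluster d r \<subseteq> {v \<in> tree_verts d. length v \<le> k}" using cluster_sub by fastforce
    with inf finite_tree_verts_le show False using finite_subset by blast
  qed
next
  assume H: "\<forall>k. \<exists>v\<in>cluster d r. k \<le> length v"
  show "infinite (cluster d r)"
  proof
    assume fin: "finite (cluster d r)"
    obtain v where "v \<in> cluster d r" "Suc (Max (length ` cluster d r)) \<le> length v" using H by blast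
    moreover have "length v \<le> Max (length ` cluster d r)" using fin calculation(1) by (auto intro: Max_ge)
    ultimately show False by simp
  qed
qed

lemma survival_eq: "survival_event d q = (\<Inter>k. Aev d q k)"
  by (auto simp: survival_event_def Aev_def infinite_cluster_iff)

lemma sets_survival: "survival_event d q \<in> sets (cone_space d q)"
  unfolding survival_eq by (intro sets.countable_INT) (auto intro: sets_Aev)

lemma Aev_decseq: "decseq (Aev d q)"
  unfolding decseq_def Aev_def by (fastforce intro: order_trans)



lemma sets_dep:
  assumes "finite J" "J \<subseteq> tree_verts d" "\<And>\<omega>. Q \<omega> = Q (restrict \<omega> J)"
  shows "{\<omega> \<in> space (cone_space d q). Q \<omega>} \<in> sets (cone_space d q)"
proof -
  have "{\<omega> \<in> space (cone_space d q). Q \<omega>} = {\<omega> \<in> space (cone_space d q). Q (restrict \<omega> J)}"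
    using assms(3) by metis
  also have "\<dots> \<in> sets (cone_space d q)" by (rule sets_finite_dep[OF assms(1,2)])
  finally show ?thesis .
qed

lemma indep_root_children:
  assumes u: "u \<in> tree_verts d" and W: "finite W" "\<And>w. w \<in> W \<Longrightarrow> w \<noteq> [] \<and> set w \<subseteq> {..<d}"
    and pf: "\<And>w1 w2. w1 \<in> W \<Longrightarrow> w2 \<in> W \<Longrightarrow> prefix w1 w2 \<Longrightarrow> w1 = w2"
    and J: "\<And>w. w \<in> W \<Longrightarrow> finite (J w) \<and> J w \<subseteq> {u @ w @ x | x. set x \<subseteq> {..<d}}"
    and dep: "\<And>w \<omega>. w \<in> W \<Longrightarrow> Q w \<omega> = Q w (restrict \<omega> (J w))"
  shows "measure (cone_space d q) ({\<omega> \<in> space (cone_space d q). \<omega> u = r} \<inter> (\<Inter>w\<in>W. {\<omega> \<in> space (cone_space d q). Q w \<omega>}))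
       = pmf q r * (\<Prod>w\<in>W. measure (cone_space d q) {\<omega> \<in> space (cone_space d q). Q w \<omega>})"
proof -
  let ?C = "cone_space d q"
  define K where "K j = (case j of None \<Rightarrow> {u} | Some w \<Rightarrow> J w)" for j
  define P where "P j x = (case j of None \<Rightarrow> x u = r | Some w \<Rightarrow> Q w x)" for j x
  let ?L = "insert None (Some ` W)"
  have Jsub: "J w \<subseteq> tree_verts d" if wW: "w \<in> W" for w
  proof
    fix v assume "v \<in> J w"
    then obtain x where v: "v = u @ w @ x" "set x \<subseteq> {..<d}" using J[OF wW] by blast
    have "set (w @ x) \<subseteq> {..<d}" using W(2)[OF wW] v by auto
    thus "v \<in> tree_verts d" using tree_verts_append[OF u] v by (metis append.assoc)
  qed
  have Kfin: "finite (K j) \<and> K j \<subseteq> tree_verts d" if "j \<in> ?L" for j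
  proof (cases j)
    case None thus ?thesis using u by (simp add: K_def)
  next
    case (Some w) hence "w \<in> W" using that by auto
    thus ?thesis using Some J Jsub by (simp add: K_def)
  qed
  have disj: "disjoint_family_on K ?L"
  proof (unfold disjoint_family_on_def, intro ballI impI)
    fix i j assume i: "i \<in> ?L" and j: "j \<in> ?L" and ij: "i \<noteq> j"
    show "K i \<inter> K j = {}"
    proof (cases i)
      case None
      then obtain w where jw: "j = Some w" "w \<in> W" using j ij by auto
      have "u \<notin> J w" using J[OF jw(2)] W(2)[OF jw(2)] by auto
      thus ?thesis using None jw by (auto simp: K_def)
    next
      case (Some w1)
      hence w1: "w1 \<in> W" using i by auto
      show ?thesis
      proof (cases j)
        case None
        have "u \<notin> J w1" using J[OF w1] W(2)[OF w1] by auto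
        thus ?thesis using None Some by (auto simp: K_def)
      next
        case (Some w2)
        hence w2: "w2 \<in> W" using j by auto
        have ne: "w1 \<noteq> w2" using ij \<open>i = Some w1\<close> Some by auto
        have "J w1 \<inter> J w2 = {}"
        proof (rule ccontr)
          assume "J w1 \<inter> J w2 \<noteq> {}"
          then obtain x y where "u @ w1 @ x = u @ w2 @ y" using J[OF w1] J[OF w2] by blast
          hence e: "w1 @ x = w2 @ y" by simp
          have "prefix w1 (w1 @ x)" "prefix w2 (w1 @ x)" using e by (auto simp: prefix_def) (metis)
          hence "prefix w1 w2 \<or> prefix w2 w1" by (rule prefix_same_cases)
          thus False using pf w1 w2 ne by metis
        qed
        thus ?thesis using \<open>i = Some w1\<close> Some by (simp add: K_def)
      qed
    qed
  qed
  have main: "measure ?C (\<Inter>j\<in>?L. {\<omega> \<in> space ?C. P j (restrict \<omega> (K j))})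
       = (\<Prod>j\<in>?L. measure ?C {\<omega> \<in> space ?C. P j (restrict \<omega> (K j))})"
    by (rule indep_events_prod) (use W Kfin disj in auto)
  have ev: "{\<omega> \<in> space ?C. P j (restrict \<omega> (K j))} = (case j of None \<Rightarrow> {\<omega> \<in> space ?C. \<omega> u = r}
      | Some w \<Rightarrow> {\<omega> \<in> space ?C. Q w \<omega>})" if "j \<in> ?L" for j
    using that dep by (auto simp: P_def K_def split: option.splits)
  have "(\<Inter>j\<in>?L. {\<omega> \<in> space ?C. P j (restrict \<omega> (K j))})
      = {\<omega> \<in> space ?C. \<omega> u = r} \<inter> (\<Inter>w\<in>W. {\<omega> \<in> space ?C. Q w \<omega>})"
    using ev by auto
  moreover have "(\<Prod>j\<in>?L. measure ?C {\<omega> \<in> space ?C. P j (restrict \<omega> (K j))})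
      = measure ?C {\<omega> \<in> space ?C. \<omega> u = r} * (\<Prod>w\<in>W. measure ?C {\<omega> \<in> space ?C. Q w \<omega>})"
  proof -
    have "(\<Prod>j\<in>?L. measure ?C {\<omega> \<in> space ?C. P j (restrict \<omega> (K j))})
        = (\<Prod>j\<in>?L. measure ?C (case j of None \<Rightarrow> {\<omega> \<in> space ?C. \<omega> u = r} | Some w \<Rightarrow> {\<omega> \<in> space ?C. Q w \<omega>}))"
      by (rule prod.cong) (use ev in auto)
    also have "\<dots> = measure ?C {\<omega> \<in> space ?C. \<omega> u = r} * (\<Prod>w\<in>W. measure ?C {\<omega> \<in> space ?C. Q w \<omega>})"
      using W(1) by (simp add: prod.reindex)
    finally show ?thesis .
  qed
  moreover have "measure ?C {\<omega> \<in> space ?C. \<omega> u = r} = pmf q r"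
    using prob_coord[OF u, of q "{r}"] by (simp add: measure_pmf_single)
  ultimately show ?thesis using main by simp
qed



definition words :: "nat \<Rightarrow> nat \<Rightarrow> nat list set" where
  "words d r = {w. set w \<subseteq> {..<d} \<and> length w = r}"

lemma finite_words: "finite (words d r)"
  unfolding words_def by (rule finite_lists_length_eq) simp

lemma card_words: "card (words d r) = d ^ r"
  unfolding words_def using card_lists_length_eq[of "{..<d}" r] by simp

lemma words_ne: "d \<ge> 1 \<Longrightarrow> words d r \<noteq> {}"
  unfolding words_def by (rule exI[of _ "replicate r 0"] | auto)+

fun gw :: "nat \<Rightarrow> nat \<Rightarrow> (nat list \<Rightarrow> nat) \<Rightarrow> nat \<Rightarrow> nat list \<Rightarrow> bool" where
  "gw d n \<omega> 0 u = True"
| "gw d n \<omega> (Suc k) u = (1 \<le> \<omega> u \<and> \<omega> u \<le> n \<and> (\<exists>w\<in>words d (\<omega> u). gw d n \<omega> k (u @ w)))"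

definition Jg :: "nat \<Rightarrow> nat \<Rightarrow> nat \<Rightarrow> nat list \<Rightarrow> nat list set" where
  "Jg d n k u = {u @ x | x. set x \<subseteq> {..<d} \<and> length x < k * n}"

lemma finite_Jg: "finite (Jg d n k u)"
proof -
  have "Jg d n k u \<subseteq> (\<lambda>x. u @ x) ` {x. set x \<subseteq> {..<d} \<and> length x \<le> k * n}"
    by (auto simp: Jg_def)
  thus ?thesis by (rule finite_subset) (intro finite_imageI finite_lists_length_le; simp)
qed

lemma gw_dep:
  assumes "n \<ge> 1" "\<And>v. v \<in> Jg d n k u \<Longrightarrow> \<omega> v = \<omega>' v"
  shows "gw d n \<omega> k u = gw d n \<omega>' k u"
  using assms(2)
proof (induction k arbitrary: u)
  case 0 thus ?case by simp
next
  case (Suc k)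
  have "u \<in> Jg d n (Suc k) u" using assms(1) by (auto simp: Jg_def intro!: exI[of _ "[]"])
  hence eq: "\<omega> u = \<omega>' u" using Suc.prems by blast
  have rec: "gw d n \<omega> k (u @ w) = gw d n \<omega>' k (u @ w)" if "\<omega> u \<le> n" "w \<in> words d (\<omega> u)" for w
  proof (rule Suc.IH)
    fix v assume "v \<in> Jg d n k (u @ w)"
    then obtain x where v: "v = u @ w @ x" "set x \<subseteq> {..<d}" "length x < k * n" by (auto simp: Jg_def)
    have "length (w @ x) < Suc k * n" using v that by (auto simp: words_def)
    moreover have "set (w @ x) \<subseteq> {..<d}" using v that by (auto simp: words_def)
    ultimately have "v \<in> Jg d n (Suc k) u" using v by (auto simp: Jg_def)
    thus "\<omega> v = \<omega>' v" using Suc.prems by blast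
  qed
  show ?case
  proof -
    have "gw d n \<omega> (Suc k) u = (1 \<le> \<omega> u \<and> \<omega> u \<le> n \<and> (\<exists>w\<in>words d (\<omega> u). gw d n \<omega>' k (u @ w)))"
      using rec by auto
    thus ?thesis using eq by simp
  qed
qed

lemma gw_restrict: "n \<ge> 1 \<Longrightarrow> gw d n \<omega> k u = gw d n (restrict \<omega> (Jg d n k u)) k u"
  by (rule gw_dep) auto

lemma gw_link:
  assumes "u \<in> cluster d \<omega>" "gw d n \<omega> k u"
  shows "\<exists>v\<in>cluster d \<omega>. length u + k \<le> length v"
  using assms
proof (induction k arbitrary: u)
  case 0 thus ?case by auto
next
  case (Suc k)
  then obtain w where w: "w \<in> words d (\<omega> u)" "gw d n \<omega> k (u @ w)" "1 \<le> \<omega> u" by auto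
  have "u @ w \<in> tree_verts d"
    using w(1) cluster_sub[OF Suc.prems(1)] by (auto simp: words_def intro: tree_verts_append)
  hence "u @ w \<in> cone d \<omega> u" using w(1) by (auto simp: cone_def words_def)
  hence "u @ w \<in> cluster d \<omega>" by (rule cluster.spread[OF Suc.prems(1)])
  from Suc.IH[OF this w(2)] obtain v where "v \<in> cluster d \<omega>" "length (u @ w) + k \<le> length v" by blast
  thus ?case using w by (auto simp: words_def intro!: bexI[of _ v])
qed

definition Pg where "Pg d q n k u = measure (cone_space d q) {\<omega> \<in> space (cone_space d q). gw d n \<omega> k u}"

lemma sets_gw: "n \<ge> 1 \<Longrightarrow> u \<in> tree_verts d \<Longrightarrow> {\<omega> \<in> space (cone_space d q). P (gw d n \<omega> k u)} \<in> sets (cone_space d q)"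
proof (rule sets_dep[of "Jg d n k u"])
  assume "n \<ge> 1" "u \<in> tree_verts d"
  show "finite (Jg d n k u)" by (rule finite_Jg)
  show "Jg d n k u \<subseteq> tree_verts d" using \<open>u \<in> tree_verts d\<close> by (auto simp: Jg_def intro: tree_verts_append)
  show "\<And>\<omega>. P (gw d n \<omega> k u) = P (gw d n (restrict \<omega> (Jg d n k u)) k u)"
    by (rule arg_cong[where f=P], rule gw_restrict[OF \<open>n \<ge> 1\<close>])
qed

lemma sets_coord: "u \<in> tree_verts d \<Longrightarrow> {\<omega> \<in> space (cone_space d q). P (\<omega> u)} \<in> sets (cone_space d q)"
  by (rule sets_dep[of "{u}"]) auto

lemma gw_rec:
  assumes n: "n \<ge> 1" and d: "d \<ge> 1" and u: "u \<in> tree_verts d"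
  shows "Pg d q n (Suc k) u = (\<Sum>r\<in>{1..n}. pmf q r * (1 - (\<Prod>w\<in>words d r. 1 - Pg d q n k (u @ w))))"
proof -
  let ?C = "cone_space d q"
  interpret C: prob_space ?C by (rule prob_space_cone)
  define E where "E r = {\<omega> \<in> space ?C. \<omega> u = r}" for r
  define F where "F w = {\<omega> \<in> space ?C. \<not> gw d n \<omega> k (u @ w)}" for w
  define G where "G r = E r - (E r \<inter> (\<Inter>w\<in>words d r. F w))" for r
  have uw: "u @ w \<in> tree_verts d" if "w \<in> words d r" for w r
    using that u by (auto simp: words_def intro: tree_verts_append)
  have Es: "E r \<in> sets ?C" for r unfolding E_def by (rule sets_coord[OF u])
  have Fs: "F w \<in> sets ?C" if "w \<in> words d r" for w r unfolding F_def by (rule sets_gw[OF n uw[OF that]])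
  have EFs: "E r \<inter> (\<Inter>w\<in>words d r. F w) \<in> sets ?C" for r
    using Es Fs finite_words words_ne[OF d] by blast
  have S: "{\<omega> \<in> space ?C. gw d n \<omega> (Suc k) u} = (\<Union>r\<in>{1..n}. G r)"
    by (auto simp: G_def E_def F_def)
  have "Pg d q n (Suc k) u = (\<Sum>r\<in>{1..n}. measure ?C (G r))"
    unfolding Pg_def S
  proof (rule C.finite_measure_finite_Union)
    show "G ` {1..n} \<subseteq> sets ?C" using Es EFs by (auto simp: G_def)
    show "disjoint_family_on G {1..n}" by (auto simp: disjoint_family_on_def G_def E_def)
  qed simp
  also have "\<dots> = (\<Sum>r\<in>{1..n}. pmf q r * (1 - (\<Prod>w\<in>words d r. 1 - Pg d q n k (u @ w))))"
  proof (rule sum.cong[OF refl])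
    fix r assume r: "r \<in> {1..n}"
    have mE: "measure ?C (E r) = pmf q r"
      using prob_coord[OF u, of q "{r}"] by (simp add: E_def measure_pmf_single)
    have mF: "measure ?C (F w) = 1 - Pg d q n k (u @ w)" if "w \<in> words d r" for w
    proof -
      have "F w = space ?C - {\<omega> \<in> space ?C. gw d n \<omega> k (u @ w)}" by (auto simp: F_def)
      thus ?thesis using C.prob_compl[OF sets_gw[OF n uw[OF that], where P="\<lambda>x. x"]] by (simp add: Pg_def)
    qed
    have "measure ?C (E r \<inter> (\<Inter>w\<in>words d r. F w)) = pmf q r * (\<Prod>w\<in>words d r. measure ?C (F w))"
      unfolding E_def F_def
    proof (rule indep_root_children[OF u finite_words])
      show "w \<noteq> [] \<and> set w \<subseteq> {..<d}" if "w \<in> words d r" for w using that r by (auto simp: words_def)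
      show "w1 = w2" if "w1 \<in> words d r" "w2 \<in> words d r" "prefix w1 w2" for w1 w2
        using that by (auto simp: words_def prefix_def)
      show "finite (Jg d n k (u @ w)) \<and> Jg d n k (u @ w) \<subseteq> {u @ w @ x |x. set x \<subseteq> {..<d}}" for w
        using finite_Jg[of d n k "u @ w"] by (auto simp: Jg_def)
      show "(\<not> gw d n \<omega> k (u @ w)) = (\<not> gw d n (restrict \<omega> (Jg d n k (u @ w))) k (u @ w))" for w \<omega>
        by (rule arg_cong[where f=Not], rule gw_restrict[OF n])
    qed
    also have "\<dots> = pmf q r * (\<Prod>w\<in>words d r. 1 - Pg d q n k (u @ w))"
      using mF by simp
    finally have mEF: "measure ?C (E r \<inter> (\<Inter>w\<in>words d r. F w)) = pmf q r * (\<Prod>w\<in>words d r. 1 - Pg d q n k (u @ w))" .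
    have "measure ?C (G r) = measure ?C (E r) - measure ?C (E r \<inter> (\<Inter>w\<in>words d r. F w))"
      unfolding G_def by (rule C.finite_measure_Diff[OF Es EFs]) auto
    thus "measure ?C (G r) = pmf q r * (1 - (\<Prod>w\<in>words d r. 1 - Pg d q n k (u @ w)))"
      using mE mEF by (simp add: algebra_simps)
  qed
  finally show ?thesis .
qed

lemma gw_lower:
  assumes n: "n \<ge> 1" and d: "d \<ge> 1" and c: "0 \<le> c" "c \<le> 1"
    and fc: "c \<le> (\<Sum>r\<in>{1..n}. pmf q r * (1 - (1 - c) ^ (d ^ r)))"
  shows "u \<in> tree_verts d \<Longrightarrow> c \<le> Pg d q n k u"
proof (induction k arbitrary: u)
  case 0
  interpret C: prob_space "cone_space d q" by (rule prob_space_cone)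
  show ?case using c by (simp add: Pg_def C.prob_space)
next
  case (Suc k)
  interpret C: prob_space "cone_space d q" by (rule prob_space_cone)
  have "c \<le> (\<Sum>r\<in>{1..n}. pmf q r * (1 - (1 - c) ^ (d ^ r)))" by (rule fc)
  also have "\<dots> \<le> (\<Sum>r\<in>{1..n}. pmf q r * (1 - (\<Prod>w\<in>words d r. 1 - Pg d q n k (u @ w))))"
  proof (rule sum_mono)
    fix r assume r: "r \<in> {1..n}"
    have "(\<Prod>w\<in>words d r. 1 - Pg d q n k (u @ w)) \<le> (\<Prod>w\<in>words d r. 1 - c)"
    proof (rule prod_mono)
      fix w assume w: "w \<in> words d r"
      have "u @ w \<in> tree_verts d" using w Suc.prems by (auto simp: words_def intro: tree_verts_append)
      hence "c \<le> Pg d q n k (u @ w)" by (rule Suc.IH)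
      moreover have "Pg d q n k (u @ w) \<le> 1" by (simp add: Pg_def)
      ultimately show "0 \<le> 1 - Pg d q n k (u @ w) \<and> 1 - Pg d q n k (u @ w) \<le> 1 - c" by simp
    qed
    also have "\<dots> = (1 - c) ^ (d ^ r)" by (simp add: card_words)
    finally show "pmf q r * (1 - (1 - c) ^ (d ^ r)) \<le> pmf q r * (1 - (\<Prod>w\<in>words d r. 1 - Pg d q n k (u @ w)))"
      by (intro mult_left_mono) auto
  qed
  also have "\<dots> = Pg d q n (Suc k) u" by (rule gw_rec[OF n d Suc.prems, symmetric])
  finally show ?case .
qed

lemma Aev_lower:
  assumes n: "n \<ge> 1" and d: "d \<ge> 1" and c: "0 \<le> c" "c \<le> 1"
    and fc: "c \<le> (\<Sum>r\<in>{1..n}. pmf q r * (1 - (1 - c) ^ (d ^ r)))"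
  shows "c \<le> measure (cone_space d q) (Aev d q k)"
proof -
  interpret C: prob_space "cone_space d q" by (rule prob_space_cone)
  have t: "[] \<in> tree_verts d" by (simp add: tree_verts_def)
  have "c \<le> Pg d q n k []" by (rule gw_lower[OF assms t])
  also have "\<dots> \<le> measure (cone_space d q) (Aev d q k)"
    unfolding Pg_def
  proof (rule C.finite_measure_mono[OF _ sets_Aev])
    show "{\<omega> \<in> space (cone_space d q). gw d n \<omega> k []} \<subseteq> Aev d q k"
      using gw_link[OF cluster.origin] by (fastforce simp: Aev_def)
  qed
  finally show ?thesis .
qed



lemma bonf:
  fixes c :: real assumes "0 \<le> c" "c \<le> 1"
  shows "(1 - c) ^ N \<le> 1 - real N * c + real N * (real N - 1) / 2 * c^2"
proof (induction N)
  case 0 thus ?case by simp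
next
  case (Suc N)
  have "(1 - c) ^ Suc N = (1 - c) * (1 - c) ^ N" by simp
  also have "\<dots> \<le> (1 - c) * (1 - real N * c + real N * (real N - 1) / 2 * c^2)"
    using Suc assms by (intro mult_left_mono) auto
  also have "\<dots> = 1 - real (Suc N) * c + real (Suc N) * (real (Suc N) - 1) / 2 * c^2
                 - real N * (real N - 1) / 2 * c^3"
    by (simp add: power2_eq_square power3_eq_cube field_simps)
  also have "\<dots> \<le> 1 - real (Suc N) * c + real (Suc N) * (real (Suc N) - 1) / 2 * c^2"
  proof -
    have "0 \<le> real N * (real N - 1) / 2 * c^3"
    proof (cases N)
      case 0 thus ?thesis by simp
    next
      case (Suc m) thus ?thesis using assms by simp
    qed
    thus ?thesis by linarith
  qed
  finally show ?case .
qed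

lemma bonf2:
  fixes c :: real assumes "0 \<le> c" "c \<le> 1"
  shows "real N * c - (real N)^2 / 2 * c^2 \<le> 1 - (1 - c) ^ N"
proof -
  have "real N * (real N - 1) / 2 * c^2 \<le> (real N)^2 / 2 * c^2"
    by (intro mult_right_mono divide_right_mono) (auto simp: power2_eq_square algebra_simps)
  thus ?thesis using bonf[OF assms, of N] by linarith
qed

lemma binomial_pgf:
  fixes p x :: real assumes "0 \<le> p" "p \<le> 1"
  shows "(\<Sum>r\<le>n. pmf (binomial_pmf n p) r * x ^ r) = (p * x + 1 - p) ^ n"
proof -
  have "(p * x + 1 - p) ^ n = (p * x + (1 - p)) ^ n" by (simp add: add_diff_eq)
  also have "\<dots> = (\<Sum>k\<le>n. of_nat (n choose k) * (p * x) ^ k * (1 - p) ^ (n - k))"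
    by (rule binomial_ring)
  also have "\<dots> = (\<Sum>r\<le>n. pmf (binomial_pmf n p) r * x ^ r)"
    using assms by (intro sum.cong refl) (simp add: power_mult_distrib algebra_simps)
  finally show ?thesis ..
qed

lemma part1:
  fixes d n :: nat and p :: real
  assumes d: "d \<ge> 2" and n: "n \<ge> 1" and p: "0 < p" "p < 1"
    and cond: "(p * real d + 1 - p) ^ n - (1 - p) ^ n > 1"
  shows "measure (cone_space d (binomial_pmf n p)) (survival_event d (binomial_pmf n p)) > 0"
proof -
  define q where "q = binomial_pmf n p"
  interpret C: prob_space "cone_space d q" by (rule prob_space_cone)
  define mu where "mu = (\<Sum>r\<in>{1..n}. pmf q r * real d ^ r)"
  define S where "S = (\<Sum>r\<in>{1..n}. pmf q r * (real d ^ r)^2)"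
  have "(\<Sum>r\<le>n. pmf q r * real d ^ r) = pmf q 0 + mu"
  proof -
    have "{..n} = insert 0 {1..n}" by auto
    thus ?thesis by (simp add: mu_def)
  qed
  moreover have "pmf q 0 = (1 - p) ^ n" using p by (simp add: q_def)
  ultimately have mu: "mu = (p * real d + 1 - p) ^ n - (1 - p) ^ n"
    using binomial_pgf[of p n "real d"] p by (simp add: q_def)
  hence mu1: "mu > 1" using cond by simp
  have Smu: "mu \<le> S" unfolding mu_def S_def
  proof (rule sum_mono)
    fix r assume "r \<in> {1..n}"
    have "real d ^ r \<le> (real d ^ r)^2" using d by (simp add: power2_eq_square)
    thus "pmf q r * real d ^ r \<le> pmf q r * (real d ^ r)^2" by (intro mult_left_mono) auto
  qed
  define c where "c = (mu - 1) / S"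
  have Spos: "S > 0" using Smu mu1 by simp
  have c0: "0 < c" using mu1 Spos by (simp add: c_def)
  have c1: "c \<le> 1" using Smu Spos by (simp add: c_def field_simps)
  have fc: "c \<le> (\<Sum>r\<in>{1..n}. pmf q r * (1 - (1 - c) ^ (d ^ r)))"
  proof -
    have "(\<Sum>r\<in>{1..n}. pmf q r * (real (d ^ r) * c - (real (d ^ r))^2 / 2 * c^2))
        \<le> (\<Sum>r\<in>{1..n}. pmf q r * (1 - (1 - c) ^ (d ^ r)))"
      by (intro sum_mono mult_left_mono bonf2) (use c0 c1 in auto)
    moreover have "(\<Sum>r\<in>{1..n}. pmf q r * (real (d ^ r) * c - (real (d ^ r))^2 / 2 * c^2))
        = mu * c - S / 2 * c^2"
      by (simp add: mu_def S_def sum_subtractf sum_distrib_left sum_distrib_right sum_divide_distrib algebra_simps)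
    moreover have "mu * c - S / 2 * c^2 = c * (mu - (mu - 1) / 2)"
      using Spos by (simp add: c_def power2_eq_square field_simps)
    moreover have "c \<le> c * (mu - (mu - 1) / 2)"
      using c0 mu1 by (simp add: field_simps)
    ultimately show ?thesis by linarith
  qed
  have low: "c \<le> measure (cone_space d q) (Aev d q k)" for k
    by (rule Aev_lower[OF n _ _ c1 fc]) (use d c0 in auto)
  have lim: "(\<lambda>k. measure (cone_space d q) (Aev d q k)) \<longlonglongrightarrow> measure (cone_space d q) (\<Inter>k. Aev d q k)"
    by (rule C.finite_Lim_measure_decseq) (auto intro: sets_Aev Aev_decseq)
  have "c \<le> measure (cone_space d q) (\<Inter>k. Aev d q k)"
    by (rule LIMSEQ_le_const[OF lim]) (use low in auto)
  thus ?thesis using c0 by (simp add: survival_eq q_def)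
qed



fun st :: "nat \<Rightarrow> (nat list \<Rightarrow> nat) \<Rightarrow> nat \<Rightarrow> nat list \<Rightarrow> nat \<Rightarrow> bool" where
  "st d \<omega> 0 u s = True"
| "st d \<omega> (Suc k) u s = (1 \<le> max s (\<omega> u) \<and> (\<exists>c<d. st d \<omega> k (u @ [c]) (max s (\<omega> u) - 1)))"

definition Js :: "nat \<Rightarrow> nat \<Rightarrow> nat list \<Rightarrow> nat list set" where
  "Js d k u = {u @ x | x. set x \<subseteq> {..<d} \<and> length x < k}"

lemma finite_Js: "finite (Js d k u)"
proof -
  have "Js d k u \<subseteq> (\<lambda>x. u @ x) ` {x. set x \<subseteq> {..<d} \<and> length x \<le> k}"
    by (auto simp: Js_def)
  thus ?thesis by (rule finite_subset) (intro finite_imageI finite_lists_length_le; simp)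
qed

lemma st_dep:
  assumes "\<And>v. v \<in> Js d k u \<Longrightarrow> \<omega> v = \<omega>' v"
  shows "st d \<omega> k u s = st d \<omega>' k u s"
  using assms
proof (induction k arbitrary: u s)
  case 0 thus ?case by simp
next
  case (Suc k)
  have "u \<in> Js d (Suc k) u" by (auto simp: Js_def intro!: exI[of _ "[]"])
  hence eq: "\<omega> u = \<omega>' u" using Suc.prems by blast
  have rec: "st d \<omega> k (u @ [c]) t = st d \<omega>' k (u @ [c]) t" if "c < d" for c t
  proof (rule Suc.IH)
    fix v assume "v \<in> Js d k (u @ [c])"
    then obtain x where v: "v = u @ [c] @ x" "set x \<subseteq> {..<d}" "length x < k" by (auto simp: Js_def)
    have "v \<in> Js d (Suc k) u" using v that by (auto simp: Js_def intro!: exI[of _ "c # x"])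
    thus "\<omega> v = \<omega>' v" using Suc.prems by blast
  qed
  show ?case using rec eq by (simp del: One_nat_def) (use rec in blast)
qed

lemma st_restrict: "st d \<omega> k u s = st d (restrict \<omega> (Js d k u)) k u s"
  by (rule st_dep) auto

lemma strict_prefix_snoc: "strict_prefix a (u @ [c]) \<Longrightarrow> prefix a u"
  by (auto simp: strict_prefix_def)

lemma st_link:
  assumes "u \<noteq> []" "u \<in> cluster d \<omega>"
    "\<And>a. strict_prefix a u \<Longrightarrow> a \<in> cluster d \<omega> \<Longrightarrow> \<omega> a \<le> s + (length u - length a)"
    "v \<in> cluster d \<omega>" "prefix u v" "length u + k \<le> length v"
  shows "st d \<omega> k u s"
  using assms
proof (induction k arbitrary: u s)
  case 0 thus ?case by simp
next
  case (Suc k)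
  obtain zs where v: "v = u @ zs" using Suc.prems(5) by (auto simp: prefix_def)
  then obtain c zs' where zs: "zs = c # zs'" using Suc.prems(6) by (cases zs) auto
  define u' where "u' = u @ [c]"
  have vt: "v \<in> tree_verts d" using cluster_sub[OF Suc.prems(4)] .
  have c: "c < d"
  proof -
    have "v ! length u = c" using v zs by simp
    moreover have "length u < length v" "length u \<noteq> 0" using v zs Suc.prems(1) by auto
    ultimately show ?thesis using vt by (auto simp: tree_verts_def)
  qed
  have pu': "prefix u' v" using v zs by (simp add: u'_def prefix_def)
  have u'c: "u' \<in> cluster d \<omega>" by (rule cluster_prefix_closed[OF Suc.prems(4) pu'])
  from u'c obtain a where a: "strict_prefix a u'" "a \<in> cluster d \<omega>" "length u' - length a \<le> \<omega> a"
    unfolding cluster_char[of u'] by (auto simp: u'_def)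
  define m where "m = max s (\<omega> u)"
  have m1: "1 \<le> m"
  proof -
    have pa: "prefix a u" using a(1) by (simp add: u'_def strict_prefix_snoc)
    show ?thesis
    proof (cases "a = u")
      case True thus ?thesis using a(3) by (simp add: m_def u'_def)
    next
      case False
      hence "strict_prefix a u" using pa by (simp add: strict_prefix_def)
      hence "\<omega> a \<le> s + (length u - length a)" "length a < length u"
        using Suc.prems(3) a(2) prefix_length_less by auto
      thus ?thesis using a(3) by (simp add: m_def u'_def)
    qed
  qed
  have "st d \<omega> k u' (m - 1)"
  proof (rule Suc.IH)
    show "u' \<noteq> []" by (simp add: u'_def)
    show "u' \<in> cluster d \<omega>" by (rule u'c)
    show "v \<in> cluster d \<omega>" "prefix u' v" by (fact Suc.prems(4), fact pu')
    show "length u' + k \<le> length v" using Suc.prems(6) by (simp add: u'_def)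
    fix b assume b: "strict_prefix b u'" "b \<in> cluster d \<omega>"
    hence pb: "prefix b u" by (simp add: u'_def strict_prefix_snoc)
    show "\<omega> b \<le> m - 1 + (length u' - length b)"
    proof (cases "b = u")
      case True thus ?thesis using m1 by (simp add: m_def u'_def)
    next
      case False
      hence "strict_prefix b u" using pb by (simp add: strict_prefix_def)
      hence "\<omega> b \<le> s + (length u - length b)" "length b < length u"
        using Suc.prems(3) b(2) prefix_length_less by auto
      thus ?thesis using m1 by (simp add: m_def u'_def)
    qed
  qed
  thus ?case using m1 c by (auto simp: m_def u'_def)
qed

lemma st_root:
  assumes "v \<in> cluster d \<omega>" "Suc k \<le> length v"
  shows "1 \<le> \<omega> [] \<and> (\<exists>c<d+1. st d \<omega> k [c] (\<omega> [] - 1))"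
proof -
  obtain c v' where v: "v = c # v'" using assms(2) by (cases v) auto
  have "c < d + 1" using cluster_sub[OF assms(1)] v by (auto simp: tree_verts_def)
  have pc: "prefix [c] v" using v by simp
  have cc: "[c] \<in> cluster d \<omega>" by (rule cluster_prefix_closed[OF assms(1) pc])
  from cc obtain a where a: "strict_prefix a [c]" "length [c] - length a \<le> \<omega> a"
    unfolding cluster_char[of "[c]"] by auto
  have "a = []" using a(1) by (cases a) (auto simp: strict_prefix_def)
  hence w1: "1 \<le> \<omega> []" using a(2) by simp
  have "st d \<omega> k [c] (\<omega> [] - 1)"
  proof (rule st_link[OF _ cc _ assms(1) pc])
    show "length [c] + k \<le> length v" using assms(2) by simp
    fix b assume "strict_prefix b [c]"
    hence "b = []" by (cases b) (auto simp: strict_prefix_def)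
    thus "\<omega> b \<le> \<omega> [] - 1 + (length [c] - length b)" using w1 by simp
  qed simp
  thus ?thesis using w1 \<open>c < d + 1\<close> by blast
qed



definition phi :: "nat \<Rightarrow> (nat \<Rightarrow> real) \<Rightarrow> nat \<Rightarrow> real" where
  "phi d g m = (if 1 \<le> m then 1 - (1 - g (m - 1)) ^ d else 0)"

fun gs :: "nat \<Rightarrow> nat pmf \<Rightarrow> nat \<Rightarrow> nat \<Rightarrow> nat \<Rightarrow> real" where
  "gs d q n 0 t = 1"
| "gs d q n (Suc k) t = (\<Sum>r\<le>n. pmf q r * phi d (gs d q n k) (max t r))"

definition Pst where "Pst d q k u s = measure (cone_space d q) {\<omega> \<in> space (cone_space d q). st d \<omega> k u s}"

lemma phi_range: "(\<And>t. 0 \<le> g t \<and> g t \<le> 1) \<Longrightarrow> 0 \<le> phi d g m \<and> phi d g m \<le> 1"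
  unfolding phi_def
proof (cases "1 \<le> m")
  case True
  assume g: "\<And>t. 0 \<le> g t \<and> g t \<le> 1"
  have "0 \<le> (1 - g (m - 1)) ^ d" "(1 - g (m - 1)) ^ d \<le> 1" using g[of "m-1"]
    by (auto intro: power_le_one)
  thus "0 \<le> (if 1 \<le> m then 1 - (1 - g (m - 1)) ^ d else 0) \<and> (if 1 \<le> m then 1 - (1 - g (m - 1)) ^ d else 0) \<le> 1"
    using True by auto
qed simp

lemma sum_pmf_le1: "(\<Sum>r\<le>n. pmf (q::nat pmf) r) \<le> 1"
proof -
  have "(\<Sum>r\<le>n. pmf q r) = measure_pmf.prob q {..n}" by (metis finite_atMost measure_measure_pmf_finite)
  thus ?thesis by simp
qed

lemma gs_range: "0 \<le> gs d q n k t \<and> gs d q n k t \<le> 1"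
proof (induction k arbitrary: t)
  case 0 thus ?case by simp
next
  case (Suc k)
  have ph: "0 \<le> phi d (gs d q n k) m \<and> phi d (gs d q n k) m \<le> 1" for m
    by (rule phi_range) (use Suc in auto)
  have "0 \<le> (\<Sum>r\<le>n. pmf q r * phi d (gs d q n k) (max t r))"
    using ph by (intro sum_nonneg) auto
  moreover have "(\<Sum>r\<le>n. pmf q r * phi d (gs d q n k) (max t r)) \<le> (\<Sum>r\<le>n. pmf q r)"
    using ph by (intro sum_mono) (auto intro: mult_left_le)
  ultimately show ?case using sum_pmf_le1[where n=n and q=q] by simp
qed

lemma sets_st: "u \<in> tree_verts d \<Longrightarrow> {\<omega> \<in> space (cone_space d q). P (st d \<omega> k u s)} \<in> sets (cone_space d q)"
proof (rule sets_dep[of "Js d k u"])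
  assume "u \<in> tree_verts d"
  show "finite (Js d k u)" by (rule finite_Js)
  show "Js d k u \<subseteq> tree_verts d" using \<open>u \<in> tree_verts d\<close> by (auto simp: Js_def intro: tree_verts_append)
  show "\<And>\<omega>. P (st d \<omega> k u s) = P (st d (restrict \<omega> (Js d k u)) k u s)"
    by (rule arg_cong[where f=P], rule st_restrict)
qed

lemma null_coord:
  assumes u: "u \<in> tree_verts d" and q: "set_pmf q \<subseteq> {..n}"
  shows "measure (cone_space d q) {\<omega> \<in> space (cone_space d q). \<omega> u \<in> - {..n}} = 0"
  using prob_coord[OF u, of q "- {..n}"] q by (auto simp: measure_pmf_zero_iff)

lemma st_step:
  assumes u: "u \<in> tree_verts d" and d: "d \<ge> 1" and q: "set_pmf q \<subseteq> {..n}"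
    and IH: "\<And>v t. v \<in> tree_verts d \<Longrightarrow> Pst d q k v t \<le> g t" and g: "\<And>t. 0 \<le> g t \<and> g t \<le> 1"
  shows "Pst d q (Suc k) u s \<le> (\<Sum>r\<le>n. pmf q r * phi d g (max s r))"
proof -
  let ?C = "cone_space d q"
  interpret C: prob_space ?C by (rule prob_space_cone)
  define W where "W = (\<lambda>c. [c]) ` {..<d}"
  define E where "E r = {\<omega> \<in> space ?C. \<omega> u = r}" for r
  define F where "F r w = {\<omega> \<in> space ?C. \<not> st d \<omega> k (u @ w) (max s r - 1)}" for r w
  define H where "H r = (if 1 \<le> max s r then E r - (E r \<inter> (\<Inter>w\<in>W. F r w)) else {})" for r
  define N where "N = {\<omega> \<in> space ?C. \<omega> u \<in> - {..n}}"
  have uw: "u @ w \<in> tree_verts d" if "w \<in> W" for w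
    using that u by (auto simp: W_def intro: tree_verts_append)
  have "[0] \<in> W" using d by (simp add: W_def)
  hence Wne: "W \<noteq> {}" "finite W" by (auto simp: W_def)
  have Es: "E r \<in> sets ?C" for r unfolding E_def by (rule sets_coord[OF u])
  have Fs: "F r w \<in> sets ?C" if "w \<in> W" for w r unfolding F_def by (rule sets_st[OF uw[OF that]])
  have EFs: "E r \<inter> (\<Inter>w\<in>W. F r w) \<in> sets ?C" for r
    using Es Fs Wne by blast
  have Hs: "H r \<in> sets ?C" for r using Es EFs by (auto simp: H_def)
  have Ns: "N \<in> sets ?C" unfolding N_def by (rule sets_coord[OF u])
  have sub: "{\<omega> \<in> space ?C. st d \<omega> (Suc k) u s} \<subseteq> N \<union> (\<Union>r\<in>{..n}. H r)"
  proof
    fix \<omega> assume \<omega>: "\<omega> \<in> {\<omega> \<in> space ?C. st d \<omega> (Suc k) u s}"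
    show "\<omega> \<in> N \<union> (\<Union>r\<in>{..n}. H r)"
    proof (cases "\<omega> u \<le> n")
      case False thus ?thesis using \<omega> by (auto simp: N_def)
    next
      case True
      from \<omega> obtain c where c: "c < d" "st d \<omega> k (u @ [c]) (max s (\<omega> u) - 1)" "1 \<le> max s (\<omega> u)" by auto
      have "[c] \<in> W" using c by (auto simp: W_def)
      hence "\<omega> \<notin> (\<Inter>w\<in>W. F (\<omega> u) w)" using c by (auto simp: F_def)
      hence "\<omega> \<in> H (\<omega> u)" using \<omega> c by (auto simp: H_def E_def)
      thus ?thesis using True by auto
    qed
  qed
  have "Pst d q (Suc k) u s \<le> measure ?C (N \<union> (\<Union>r\<in>{..n}. H r))"
    unfolding Pst_def by (rule C.finite_measure_mono[OF sub]) (use Ns Hs in auto)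
  also have "\<dots> \<le> measure ?C N + measure ?C (\<Union>r\<in>{..n}. H r)"
    by (rule measure_Un_le) (use Ns Hs in auto)
  also have "\<dots> = measure ?C (\<Union>r\<in>{..n}. H r)"
    using null_coord[OF u q] by (simp add: N_def)
  also have "\<dots> \<le> (\<Sum>r\<le>n. measure ?C (H r))"
    by (rule C.finite_measure_subadditive_finite) (use Hs in auto)
  also have "\<dots> \<le> (\<Sum>r\<le>n. pmf q r * phi d g (max s r))"
  proof (rule sum_mono)
    fix r
    show "measure ?C (H r) \<le> pmf q r * phi d g (max s r)"
    proof (cases "1 \<le> max s r")
      case False
      hence "s = 0" "r = 0" by auto
      thus ?thesis by (simp add: H_def phi_def)
    next
      case True
      define m where "m = max s r"
      have mE: "measure ?C (E r) = pmf q r"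
        using prob_coord[OF u, of q "{r}"] by (simp add: E_def measure_pmf_single)
      have mF: "measure ?C (F r w) = 1 - Pst d q k (u @ w) (m - 1)" if "w \<in> W" for w
      proof -
        have "F r w = space ?C - {\<omega> \<in> space ?C. st d \<omega> k (u @ w) (m - 1)}" by (auto simp: F_def m_def)
        thus ?thesis using C.prob_compl[OF sets_st[OF uw[OF that], where P="\<lambda>x. x"]] by (simp add: Pst_def)
      qed
      have "measure ?C (E r \<inter> (\<Inter>w\<in>W. F r w)) = pmf q r * (\<Prod>w\<in>W. measure ?C (F r w))"
        unfolding E_def F_def
      proof (rule indep_root_children[OF u Wne(2)])
        show "w \<noteq> [] \<and> set w \<subseteq> {..<d}" if "w \<in> W" for w using that by (auto simp: W_def)
        show "w1 = w2" if "w1 \<in> W" "w2 \<in> W" "prefix w1 w2" for w1 w2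
          using that by (auto simp: W_def prefix_def)
        show "finite (Js d k (u @ w)) \<and> Js d k (u @ w) \<subseteq> {u @ w @ x |x. set x \<subseteq> {..<d}}" for w
          using finite_Js[of d k "u @ w"] by (auto simp: Js_def)
        show "(\<not> st d \<omega> k (u @ w) (max s r - 1)) = (\<not> st d (restrict \<omega> (Js d k (u @ w))) k (u @ w) (max s r - 1))" for w \<omega>
          by (rule arg_cong[where f=Not], rule st_restrict)
      qed
      also have "\<dots> = pmf q r * (\<Prod>w\<in>W. 1 - Pst d q k (u @ w) (m - 1))"
        using mF by simp
      finally have mEF: "measure ?C (E r \<inter> (\<Inter>w\<in>W. F r w)) = pmf q r * (\<Prod>w\<in>W. 1 - Pst d q k (u @ w) (m - 1))" .
      have "(1 - g (m - 1)) ^ d = (\<Prod>w\<in>W. 1 - g (m - 1))"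
        by (simp add: W_def card_image inj_on_def)
      also have "\<dots> \<le> (\<Prod>w\<in>W. 1 - Pst d q k (u @ w) (m - 1))"
      proof (rule prod_mono)
        fix w assume "w \<in> W"
        show "0 \<le> 1 - g (m - 1) \<and> 1 - g (m - 1) \<le> 1 - Pst d q k (u @ w) (m - 1)"
          using g[of "m-1"] IH[OF uw[OF \<open>w \<in> W\<close>], of "m-1"] by simp
      qed
      finally have pr: "(1 - g (m - 1)) ^ d \<le> (\<Prod>w\<in>W. 1 - Pst d q k (u @ w) (m - 1))" .
      have "measure ?C (H r) = measure ?C (E r) - measure ?C (E r \<inter> (\<Inter>w\<in>W. F r w))"
        unfolding H_def using True by (simp add: C.finite_measure_Diff[OF Es EFs])
      also have "\<dots> = pmf q r * (1 - (\<Prod>w\<in>W. 1 - Pst d q k (u @ w) (m - 1)))"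
        using mE mEF by (simp add: algebra_simps)
      also have "\<dots> \<le> pmf q r * (1 - (1 - g (m - 1)) ^ d)"
        using pr by (intro mult_left_mono) auto
      also have "\<dots> = pmf q r * phi d g (max s r)"
        using True by (simp add: phi_def m_def)
      finally show ?thesis .
    qed
  qed
  finally show ?thesis .
qed

lemma Pst_le_gs:
  assumes d: "d \<ge> 1" and q: "set_pmf q \<subseteq> {..n}"
  shows "v \<in> tree_verts d \<Longrightarrow> Pst d q k v t \<le> gs d q n k t"
proof (induction k arbitrary: v t)
  case 0
  interpret C: prob_space "cone_space d q" by (rule prob_space_cone)
  show ?case by (simp add: Pst_def)
next
  case (Suc k)
  show ?case unfolding gs.simps
    by (rule st_step[OF Suc.prems d q Suc.IH gs_range])
qed

lemma Aev_upper:
  assumes d: "d \<ge> 1" and q: "set_pmf q \<subseteq> {..n}"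
  shows "measure (cone_space d q) (Aev d q (Suc k)) \<le> real (d + 1) * (\<Sum>t<n. gs d q n k t)"
proof -
  let ?C = "cone_space d q"
  interpret C: prob_space ?C by (rule prob_space_cone)
  have t0: "[] \<in> tree_verts d" by (simp add: tree_verts_def)
  have ct: "[c] \<in> tree_verts d" if "c < d + 1" for c using that by (simp add: tree_verts_def)
  define N where "N = {\<omega> \<in> space ?C. \<omega> [] \<in> - {..n}}"
  define B where "B p = {\<omega> \<in> space ?C. st d \<omega> k [snd p] (fst p)}" for p
  let ?I = "{..<n} \<times> {..<d+1}"
  have Ns: "N \<in> sets ?C" unfolding N_def by (rule sets_coord[OF t0])
  have Bs: "B p \<in> sets ?C" if "p \<in> ?I" for p
    unfolding B_def using that by (intro sets_st ct) auto
  have sub: "Aev d q (Suc k) \<subseteq> N \<union> (\<Union>p\<in>?I. B p)"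
  proof
    fix \<omega> assume \<omega>: "\<omega> \<in> Aev d q (Suc k)"
    then obtain v where v: "v \<in> cluster d \<omega>" "Suc k \<le> length v" and sp: "\<omega> \<in> space ?C" by (auto simp: Aev_def)
    from st_root[OF v] obtain c where c: "1 \<le> \<omega> []" "c < d + 1" "st d \<omega> k [c] (\<omega> [] - 1)" by blast
    show "\<omega> \<in> N \<union> (\<Union>p\<in>?I. B p)"
    proof (cases "\<omega> [] \<le> n")
      case False thus ?thesis using sp by (auto simp: N_def)
    next
      case True
      hence "(\<omega> [] - 1, c) \<in> ?I" using c by auto
      moreover have "\<omega> \<in> B (\<omega> [] - 1, c)" using c sp by (simp add: B_def)
      ultimately show ?thesis by blast
    qed
  qed
  have "measure ?C (Aev d q (Suc k)) \<le> measure ?C (N \<union> (\<Union>p\<in>?I. B p))"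
    by (rule C.finite_measure_mono[OF sub]) (use Ns Bs in auto)
  also have "\<dots> \<le> measure ?C N + measure ?C (\<Union>p\<in>?I. B p)"
    by (rule measure_Un_le) (use Ns Bs in auto)
  also have "\<dots> = measure ?C (\<Union>p\<in>?I. B p)"
    using null_coord[OF t0 q] by (simp add: N_def)
  also have "\<dots> \<le> (\<Sum>p\<in>?I. measure ?C (B p))"
    by (rule C.finite_measure_subadditive_finite) (use Bs in auto)
  also have "\<dots> \<le> (\<Sum>p\<in>?I. gs d q n k (fst p))"
  proof (rule sum_mono)
    fix p assume "p \<in> ?I"
    thus "measure ?C (B p) \<le> gs d q n k (fst p)"
      using Pst_le_gs[OF d q ct[of "snd p"]] by (auto simp: B_def Pst_def)
  qed
  also have "\<dots> = (\<Sum>(t,c)\<in>?I. gs d q n k t)" by (simp add: case_prod_beta)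
  also have "\<dots> = (\<Sum>t<n. \<Sum>c<d+1. gs d q n k t)" by (rule sum.cartesian_product[symmetric])
  also have "\<dots> = real (d + 1) * (\<Sum>t<n. gs d q n k t)" by (simp add: sum_distrib_left)
  finally show ?thesis .
qed



lemma phi_mono:
  assumes "\<And>t. g t \<le> g' t" "\<And>t. 0 \<le> g t" "\<And>t. g' t \<le> 1"
  shows "phi d g m \<le> phi d g' m"
proof (cases "1 \<le> m")
  case True
  have "(1 - g' (m - 1)) ^ d \<le> (1 - g (m - 1)) ^ d"
    using assms[of "m - 1"] by (intro power_mono) auto
  thus ?thesis using True by (simp add: phi_def)
qed (simp add: phi_def)

lemma gs_dec: "gs d q n (Suc k) t \<le> gs d q n k t"
proof (induction k arbitrary: t)
  case 0 thus ?case using gs_range[of d q n "Suc 0" t] by simp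
next
  case (Suc k)
  have "gs d q n (Suc (Suc k)) t = (\<Sum>r\<le>n. pmf q r * phi d (gs d q n (Suc k)) (max t r))" by simp
  also have "\<dots> \<le> (\<Sum>r\<le>n. pmf q r * phi d (gs d q n k) (max t r))"
  proof (intro sum_mono mult_left_mono)
    fix r show "phi d (gs d q n (Suc k)) (max t r) \<le> phi d (gs d q n k) (max t r)"
      by (rule phi_mono[OF Suc.IH]) (use gs_range in blast)+
  qed simp
  also have "\<dots> = gs d q n (Suc k) t" by simp
  finally show ?case .
qed

lemma gs_conv: "convergent (\<lambda>k. gs d q n k t)"
proof -
  have "decseq (\<lambda>k. gs d q n k t)" using gs_dec by (intro decseq_SucI) auto
  moreover have "\<forall>i. 0 \<le> gs d q n i t" using gs_range by auto
  ultimately obtain L where "(\<lambda>k. gs d q n k t) \<longlonglongrightarrow> L" by (rule decseq_convergent)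
  thus ?thesis by (rule convergentI)
qed

definition Lg where "Lg d q n t = lim (\<lambda>k. gs d q n k t)"

lemma gs_tendsto: "(\<lambda>k. gs d q n k t) \<longlonglongrightarrow> Lg d q n t"
  unfolding Lg_def using gs_conv convergent_LIMSEQ_iff by blast

lemma Lg_range: "0 \<le> Lg d q n t \<and> Lg d q n t \<le> 1"
proof
  show "0 \<le> Lg d q n t" by (rule LIMSEQ_le_const[OF gs_tendsto]) (use gs_range in auto)
  show "Lg d q n t \<le> 1" by (rule LIMSEQ_le_const2[OF gs_tendsto]) (use gs_range in auto)
qed

lemma phi_tendsto: "(\<lambda>k. phi d (gs d q n k) m) \<longlonglongrightarrow> phi d (Lg d q n) m"
  unfolding phi_def by (cases "1 \<le> m") (auto intro!: tendsto_intros gs_tendsto)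

lemma Lg_fix: "Lg d q n t = (\<Sum>r\<le>n. pmf q r * phi d (Lg d q n) (max t r))"
proof (rule LIMSEQ_unique)
  show "(\<lambda>k. gs d q n (Suc k) t) \<longlonglongrightarrow> Lg d q n t"
    using gs_tendsto LIMSEQ_Suc by blast
  show "(\<lambda>k. gs d q n (Suc k) t) \<longlonglongrightarrow> (\<Sum>r\<le>n. pmf q r * phi d (Lg d q n) (max t r))"
    unfolding gs.simps by (intro tendsto_intros phi_tendsto)
qed

lemma bern_strict:
  fixes z :: real assumes "d \<ge> 2" "0 < z" "z \<le> 1"
  shows "1 - (1 - z) ^ d < real d * z"
proof -
  obtain e where e: "d = Suc e" "e \<ge> 1" using assms(1) by (cases d) auto
  have "1 + real e * (- z) \<le> (1 + (- z)) ^ e" by (rule Bernoulli_inequality) (use assms in auto)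
  hence b: "1 - real e * z \<le> (1 - z) ^ e" by simp
  have "(1 - z) * (1 - real e * z) \<le> (1 - z) * (1 - z) ^ e"
    using b assms by (intro mult_left_mono) auto
  hence "(1 - z) * (1 - real e * z) \<le> (1 - z) ^ d" using e by simp
  moreover have "(1 - z) * (1 - real e * z) = 1 - real d * z + real e * z^2"
    using e by (simp add: algebra_simps power2_eq_square)
  moreover have "0 < real e * z^2" using e assms by simp
  ultimately show ?thesis by linarith
qed

lemma bern_weak:
  fixes z :: real assumes "0 \<le> z" "z \<le> 1"
  shows "1 - (1 - z) ^ d \<le> real d * z"
proof -
  have "1 + real d * (- z) \<le> (1 + (- z)) ^ d" by (rule Bernoulli_inequality) (use assms in auto)
  thus ?thesis by simp
qed



lemma lyap:
  fixes D :: real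
  assumes D: "D \<ge> 2" and sum1: "(\<Sum>r\<le>n. pmf q r) = 1"
    and cond: "D * (\<Sum>r\<le>n. pmf q r * D ^ r) \<le> 2 * D - 1"
  shows "D * (\<Sum>r\<le>n. pmf q r * ((D ^ max t r - 1) / (D - 1))) \<le> (D ^ Suc t - 1) / (D - 1)"
proof -
  have trm: "D ^ Suc (max t r) \<le> D ^ Suc r + D ^ Suc t - D" for r
  proof -
    have "D \<le> D ^ Suc k" for k
    proof -
      have "1 \<le> D ^ k" using D by (intro one_le_power) auto
      hence "D * 1 \<le> D * D ^ k" using D by (intro mult_left_mono) auto
      thus ?thesis by simp
    qed
    thus ?thesis by (cases "t \<le> r") (auto simp: max_def)
  qed
  have "D * (\<Sum>r\<le>n. pmf q r * (D ^ max t r - 1)) = (\<Sum>r\<le>n. pmf q r * D ^ Suc (max t r)) - D * (\<Sum>r\<le>n. pmf q r)"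
    by (simp add: sum_distrib_left sum_subtractf algebra_simps)
  also have "\<dots> = (\<Sum>r\<le>n. pmf q r * D ^ Suc (max t r)) - D" using sum1 by simp
  also have "(\<Sum>r\<le>n. pmf q r * D ^ Suc (max t r)) \<le> (\<Sum>r\<le>n. pmf q r * (D ^ Suc r + D ^ Suc t - D))"
    by (intro sum_mono mult_left_mono trm) auto
  also have "(\<Sum>r\<le>n. pmf q r * (D ^ Suc r + D ^ Suc t - D)) = (\<Sum>r\<le>n. D * (pmf q r * D ^ r) + (D ^ Suc t - D) * pmf q r)"
    by (rule sum.cong) (simp_all add: algebra_simps)
  also have "\<dots> = D * (\<Sum>r\<le>n. pmf q r * D ^ r) + (D ^ Suc t - D) * (\<Sum>r\<le>n. pmf q r)"
    by (simp only: sum.distrib sum_distrib_left)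
  also have "\<dots> = D * (\<Sum>r\<le>n. pmf q r * D ^ r) + (D ^ Suc t - D)" using sum1 by simp
  finally have key: "D * (\<Sum>r\<le>n. pmf q r * (D ^ max t r - 1)) \<le> D ^ Suc t - 1"
    using cond by linarith
  have "D * (\<Sum>r\<le>n. pmf q r * ((D ^ max t r - 1) / (D - 1))) = D * (\<Sum>r\<le>n. pmf q r * (D ^ max t r - 1)) / (D - 1)"
    by (simp add: sum_divide_distrib[symmetric])
  also have "\<dots> \<le> (D ^ Suc t - 1) / (D - 1)"
    using key D by (intro divide_right_mono) auto
  finally show ?thesis .
qed

lemma L_zero:
  fixes L :: "nat \<Rightarrow> real"
  assumes d: "d \<ge> 2" and n: "n \<ge> 1" and qn: "pmf q n > 0" and sum1: "(\<Sum>r\<le>n. pmf q r) = 1"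
    and cond: "real d * (\<Sum>r\<le>n. pmf q r * real d ^ r) \<le> 2 * real d - 1"
    and fixp: "\<And>t. L t = (\<Sum>r\<le>n. pmf q r * phi d L (max t r))"
    and rng: "\<And>t. 0 \<le> L t \<and> L t \<le> 1"
  shows "t < n \<Longrightarrow> L t = 0"
proof -
  define D where "D = real d"
  have D2: "D \<ge> 2" using d by (simp add: D_def)
  define y where "y m = (D ^ m - 1) / (D - 1)" for m
  have ypos: "0 < y m" if "1 \<le> m" for m
  proof -
    have "1 < D ^ m" using D2 that by (intro one_less_power) auto
    thus ?thesis using D2 by (simp add: y_def)
  qed
  have y0: "y 0 = 0" by (simp add: y_def)
  define c where "c = Max ((\<lambda>t. L t / y (Suc t)) ` {..<n})"
  have "(0::nat) \<in> {..<n}" using n by simp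
  hence ne: "(\<lambda>t. L t / y (Suc t)) ` {..<n} \<noteq> {}" by blast
  have cge: "L t \<le> c * y (Suc t)" if "t < n" for t
  proof -
    have "L t / y (Suc t) \<le> c" unfolding c_def using that by (intro Max_ge) auto
    thus ?thesis using ypos[of "Suc t"] by (simp add: field_simps)
  qed
  obtain t0 where t0: "t0 < n" "c = L t0 / y (Suc t0)"
    using Max_in[OF _ ne] by (auto simp: c_def)
  have c0: "c \<le> 0"
  proof (rule ccontr)
    assume "\<not> c \<le> 0" hence cpos: "c > 0" by simp
    have bnd: "phi d L (max t0 r) \<le> D * c * y (max t0 r)" if "r \<le> n" for r
    proof (cases "max t0 r = 0")
      case True thus ?thesis by (simp add: phi_def y0)
    next
      case False
      define m where "m = max t0 r"
      have m: "1 \<le> m" "m - 1 < n" using False that t0 by (auto simp: m_def)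
      have "phi d L m = 1 - (1 - L (m - 1)) ^ d" using m by (simp add: phi_def)
      also have "\<dots> \<le> D * L (m - 1)" unfolding D_def by (rule bern_weak) (use rng in auto)
      also have "\<dots> \<le> D * (c * y (Suc (m - 1)))" using cge[OF m(2)] D2 by (intro mult_left_mono) auto
      also have "Suc (m - 1) = m" using m by simp
      finally show ?thesis by (simp add: m_def mult.assoc)
    qed
    have strict: "phi d L (max t0 n) < D * c * y (max t0 n)"
    proof -
      have mn: "max t0 n = n" using t0 by simp
      have yn: "0 < y n" using ypos n by simp
      show ?thesis
      proof (cases "L (n - 1) = 0")
        case True
        hence "phi d L n = 0" using n by (simp add: phi_def)
        thus ?thesis using mn yn cpos D2 by simp
      next
        case False
        hence Lp: "0 < L (n - 1)" using rng[of "n - 1"] by simp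
        have "phi d L n = 1 - (1 - L (n - 1)) ^ d" using n by (simp add: phi_def)
        also have "\<dots> < D * L (n - 1)" unfolding D_def by (rule bern_strict) (use d Lp rng in auto)
        also have "\<dots> \<le> D * (c * y (Suc (n - 1)))" using cge[of "n - 1"] n D2 by (intro mult_left_mono) auto
        also have "Suc (n - 1) = n" using n by simp
        finally show ?thesis using mn by (simp add: mult.assoc)
      qed
    qed
    have "0 < (\<Sum>r\<le>n. pmf q r * (D * c * y (max t0 r) - phi d L (max t0 r)))"
    proof (rule sum_pos2[of _ n])
      show "0 < pmf q n * (D * c * y (max t0 n) - phi d L (max t0 n))"
        using qn strict by simp
      show "0 \<le> pmf q r * (D * c * y (max t0 r) - phi d L (max t0 r))" if "r \<in> {..n}" for r
        using bnd[of r] that by simp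
    qed auto
    hence "(\<Sum>r\<le>n. pmf q r * phi d L (max t0 r)) < (\<Sum>r\<le>n. pmf q r * (D * c * y (max t0 r)))"
      by (simp add: sum_subtractf right_diff_distrib)
    also have "\<dots> = c * (D * (\<Sum>r\<le>n. pmf q r * y (max t0 r)))"
      by (simp add: sum_distrib_left algebra_simps)
    also have "\<dots> \<le> c * y (Suc t0)"
      using lyap[OF D2 sum1, of t0] cond cpos by (intro mult_left_mono) (auto simp: y_def D_def)
    also have "\<dots> = L t0" using t0 ypos[of "Suc t0"] by simp
    finally show False using fixp[of t0] by simp
  qed
  show "t < n \<Longrightarrow> L t = 0"
  proof -
    assume "t < n"
    hence "L t \<le> c * y (Suc t)" by (rule cge)
    also have "\<dots> \<le> 0" using c0 ypos[of "Suc t"] by (simp add: mult_nonpos_nonneg)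
    finally show ?thesis using rng[of t] by simp
  qed
qed



lemma part2:
  fixes d n :: nat and p :: real
  assumes d: "d \<ge> 2" and n: "n \<ge> 1" and p: "0 < p" "p < 1"
    and cond: "2 * real d - real d * (p * real d + 1 - p) ^ n \<ge> 1"
  shows "measure (cone_space d (binomial_pmf n p)) (survival_event d (binomial_pmf n p)) = 0"
proof -
  define q where "q = binomial_pmf n p"
  interpret C: prob_space "cone_space d q" by (rule prob_space_cone)
  have setq: "set_pmf q \<subseteq> {..n}" using p by (simp add: q_def)
  have qn: "pmf q n > 0" using p by (simp add: q_def)
  have sum1: "(\<Sum>r\<le>n. pmf q r) = 1"
    using binomial_pgf[of p n 1] p by (simp add: q_def)
  have cnd: "real d * (\<Sum>r\<le>n. pmf q r * real d ^ r) \<le> 2 * real d - 1"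
    using binomial_pgf[of p n "real d"] p cond by (simp add: q_def)
  have L0: "Lg d q n t = 0" if "t < n" for t
    by (rule L_zero[OF d n qn sum1 cnd Lg_fix Lg_range that])
  have lim: "(\<lambda>k. real (d + 1) * (\<Sum>t<n. gs d q n k t)) \<longlonglongrightarrow> real (d + 1) * (\<Sum>t<n. Lg d q n t)"
    by (intro tendsto_intros gs_tendsto)
  hence lim0: "(\<lambda>k. real (d + 1) * (\<Sum>t<n. gs d q n k t)) \<longlonglongrightarrow> 0"
    using L0 by simp
  have le: "measure (cone_space d q) (survival_event d q) \<le> real (d + 1) * (\<Sum>t<n. gs d q n k t)" for k
  proof -
    have "measure (cone_space d q) (survival_event d q) \<le> measure (cone_space d q) (Aev d q (Suc k))"
      by (rule C.finite_measure_mono[OF _ sets_Aev]) (auto simp: survival_eq)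
    also have "\<dots> \<le> real (d + 1) * (\<Sum>t<n. gs d q n k t)"
      by (rule Aev_upper) (use d setq in auto)
    finally show ?thesis .
  qed
  have "measure (cone_space d q) (survival_event d q) \<le> 0"
    by (rule LIMSEQ_le_const[OF lim0]) (use le in auto)
  thus ?thesis by (simp add: q_def measure_le_0_iff)
qed

theorem mainTheorem9:
  fixes d n :: nat and p :: real
  assumes "d \<ge> 2" and "n \<ge> 1" and "0 < p" and "p < 1"
  shows "((p * real d + 1 - p) ^ n - (1 - p) ^ n > 1 \<longrightarrow>
           measure (cone_space d (binomial_pmf n p)) (survival_event d (binomial_pmf n p)) > 0)
       \<and> (2 * real d - real d * (p * real d + 1 - p) ^ n \<ge> 1 \<longrightarrow>
           measure (cone_space d (binomial_pmf n p)) (survival_event d (binomial_pmf n p)) = 0)"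
  using part1[OF assms] part2[OF assms] by blast

end
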